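(* In the upper half-space model $\mathbb{H}^3=\{x_3>0\}$ with metric $\frac{1}{x_3^2}(dx_1^2+dx_2^2+dx_3^2)$, let $E$ be the end of revolution $\{(\gamma_1(s)\cos\theta,\gamma_1(s)\sin\theta,\gamma_2(s)): s\ge0,\theta\in[0,2\pi)\}$, where $\gamma(s)=(\gamma_1(s),0,\gamma_2(s))$, $s\in[0,\infty)$, is a regular curve parametrized by hyperbolic arc length with $\gamma_1>0$, $\gamma_2>0$. Suppose that for some $c>0$ the set $I_+=\{s\in[0,\infty): \gamma_2(s)/\gamma_1(s)\ge c\}$ satisfies $\int_{I_+}ds=\infty$. Then $E$ is parabolic.
   Context: $E$ carries the metric induced by the immersion $(s,\theta)\mapsto(\gamma_1(s)\cos\theta,\gamma_1(s)\sin\theta,\gamma_2(s))$. An end is parabolic if every bounded harmonic function on it is determined by its boundary values. *)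

theory Defs
  imports "HOL-Analysis.Analysis"
begin

definition smooth_halfline :: "(real \<Rightarrow> real) \<Rightarrow> bool" where
  "smooth_halfline g \<longleftrightarrow> (\<exists>D. D 0 = g \<and>
     (\<forall>k s. 0 \<le> s \<longrightarrow> (D k has_real_derivative D (Suc k) s) (at s within {0..})))"

definition ps :: "(real \<times> real \<Rightarrow> real) \<Rightarrow> real \<times> real \<Rightarrow> real" where
  "ps u p = deriv (\<lambda>t. u (t, snd p)) (fst p)"

definition pt :: "(real \<times> real \<Rightarrow> real) \<Rightarrow> real \<times> real \<Rightarrow> real" where
  "pt u p = deriv (\<lambda>t. u (fst p, t)) (snd p)"

definition C2_on :: "(real \<times> real) set \<Rightarrow> (real \<times> real \<Rightarrow> real) \<Rightarrow> bool" where
  "C2_on S u \<longleftrightarrow> u differentiable_on S \<and>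
     ps u differentiable_on S \<and> pt u differentiable_on S \<and>
     continuous_on S (ps (ps u)) \<and> continuous_on S (pt (ps u)) \<and>
     continuous_on S (ps (pt u)) \<and> continuous_on S (pt (pt u))"

definition imm :: "(real \<Rightarrow> real) \<Rightarrow> (real \<Rightarrow> real) \<Rightarrow> nat \<Rightarrow> real \<times> real \<Rightarrow> real" where
  "imm g1 g2 i p = (if i = 0 then g1 (fst p) * cos (snd p)
                    else if i = 1 then g1 (fst p) * sin (snd p) else g2 (fst p))"

text \<open>Coefficients E, F, G of the metric induced by the immersion from the hyperbolic
  metric (dx1^2+dx2^2+dx3^2)/x3^2.\<close>
definition metE :: "(real \<Rightarrow> real) \<Rightarrow> (real \<Rightarrow> real) \<Rightarrow> real \<times> real \<Rightarrow> real" where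
  "metE g1 g2 p = (\<Sum>i<3. (ps (imm g1 g2 i) p)\<^sup>2) / (g2 (fst p))\<^sup>2"

definition metF :: "(real \<Rightarrow> real) \<Rightarrow> (real \<Rightarrow> real) \<Rightarrow> real \<times> real \<Rightarrow> real" where
  "metF g1 g2 p = (\<Sum>i<3. ps (imm g1 g2 i) p * pt (imm g1 g2 i) p) / (g2 (fst p))\<^sup>2"

definition metG :: "(real \<Rightarrow> real) \<Rightarrow> (real \<Rightarrow> real) \<Rightarrow> real \<times> real \<Rightarrow> real" where
  "metG g1 g2 p = (\<Sum>i<3. (pt (imm g1 g2 i) p)\<^sup>2) / (g2 (fst p))\<^sup>2"

text \<open>Laplace-Beltrami operator of the induced metric in the coordinates (s,theta):
  (1/sqrt g) d_i (sqrt g g^{ij} d_j u).\<close>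
definition laplace_beltrami ::
  "(real \<Rightarrow> real) \<Rightarrow> (real \<Rightarrow> real) \<Rightarrow> (real \<times> real \<Rightarrow> real) \<Rightarrow> real \<times> real \<Rightarrow> real" where
  "laplace_beltrami g1 g2 u p =
     (let E = metE g1 g2; F = metF g1 g2; G = metG g1 g2;
          W = (\<lambda>q. sqrt (E q * G q - (F q)\<^sup>2))
      in (ps (\<lambda>q. (G q * ps u q - F q * pt u q) / W q) p
          + pt (\<lambda>q. (E q * pt u q - F q * ps u q) / W q) p) / W p)"

text \<open>Functions on the end E = [0,\<infinity>) \<times> S^1 are functions of (s,theta), 2pi-periodic in theta.
  A bounded harmonic function on E, continuous up to the boundary s = 0.\<close>
definition bdd_harmonic_on_end ::
  "(real \<Rightarrow> real) \<Rightarrow> (real \<Rightarrow> real) \<Rightarrow> (real \<times> real \<Rightarrow> real) \<Rightarrow> bool" where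
  "bdd_harmonic_on_end g1 g2 u \<longleftrightarrow>
     (\<forall>s \<theta>. u (s, \<theta> + 2 * pi) = u (s, \<theta>)) \<and>
     continuous_on {p. 0 \<le> fst p} u \<and>
     (\<exists>M. \<forall>p. 0 \<le> fst p \<longrightarrow> \<bar>u p\<bar> \<le> M) \<and>
     C2_on {p. 0 < fst p} u \<and>
     (\<forall>p. 0 < fst p \<longrightarrow> laplace_beltrami g1 g2 u p = 0)"

definition parabolic_end :: "(real \<Rightarrow> real) \<Rightarrow> (real \<Rightarrow> real) \<Rightarrow> bool" where
  "parabolic_end g1 g2 \<longleftrightarrow>
     (\<forall>u v. bdd_harmonic_on_end g1 g2 u \<longrightarrow> bdd_harmonic_on_end g1 g2 v \<longrightarrow>
        (\<forall>\<theta>. u (0, \<theta>) = v (0, \<theta>)) \<longrightarrow> (\<forall>p. 0 \<le> fst p \<longrightarrow> u p = v p))"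

end

theory Submission
  imports Defs
begin

lemma deriv_at_pos:
  assumes "\<And>s. 0 \<le> s \<Longrightarrow> (g has_real_derivative g' s) (at s within {0..})" "0 < s"
  shows "(g has_real_derivative g' s) (at s)"
proof -
  have "s \<in> interior {0..}" using assms(2) by simp
  then have "at s within {0..} = at s" by (rule at_within_interior)
  then show ?thesis using assms by (metis less_imp_le)
qed

lemma ps_has:
  assumes "f differentiable_on {p. 0 < fst p}" "0 < s"
  shows "((\<lambda>t. f (t, th)) has_real_derivative ps f (s, th)) (at s)"
proof -
  have op: "open {p::real\<times>real. 0 < fst p}"
    by (simp add: open_Collect_less continuous_on_fst continuous_on_const)
  have "f differentiable at (s, th)"
    using assms op differentiable_on_eq_differentiable_at by fastforce
  moreover have "(\<lambda>t. (t, th)) differentiable at s" by (auto intro!: derivative_intros)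
  ultimately have "(f \<circ> (\<lambda>t. (t, th))) differentiable at s"
    by (intro differentiable_chain_at) auto
  then have "(\<lambda>t. f (t, th)) differentiable at s" by (simp add: o_def)
  then show ?thesis unfolding ps_def by (simp add: DERIV_deriv_iff_real_differentiable)
qed

lemma pt_has:
  assumes "f differentiable_on {p. 0 < fst p}" "0 < s"
  shows "((\<lambda>t. f (s, t)) has_real_derivative pt f (s, th)) (at th)"
proof -
  have op: "open {p::real\<times>real. 0 < fst p}"
    by (simp add: open_Collect_less continuous_on_fst continuous_on_const)
  have "f differentiable at (s, th)"
    using assms op differentiable_on_eq_differentiable_at by fastforce
  moreover have "(\<lambda>t. (s, t)) differentiable at th" by (auto intro!: derivative_intros)
  ultimately have "(f \<circ> (\<lambda>t. (s, t))) differentiable at th"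
    by (intro differentiable_chain_at) auto
  then have "(\<lambda>t. f (s, t)) differentiable at th" by (simp add: o_def)
  then show ?thesis unfolding pt_def by (simp add: DERIV_deriv_iff_real_differentiable)
qed

lemma second_deriv_max:
  fixes f f' :: "real \<Rightarrow> real"
  assumes d: "0 < d" and mx: "\<And>y. \<bar>x - y\<bar> < d \<Longrightarrow> f y \<le> f x"
    and df: "\<And>y. \<bar>x - y\<bar> < d \<Longrightarrow> (f has_real_derivative f' y) (at y)"
    and df2: "(f' has_real_derivative D) (at x)"
  shows "f' x = 0 \<and> D \<le> 0"
proof
  show 0: "f' x = 0" using DERIV_local_max[OF df[of x] d] mx d by auto
  show "D \<le> 0"
  proof (rule ccontr)
    assume "\<not> D \<le> 0"
    then obtain e where e: "e > 0" "\<And>h. h > 0 \<Longrightarrow> h < e \<Longrightarrow> f' x < f' (x + h)"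
      using DERIV_pos_inc_right[OF df2] by force
    define h where "h = min e d / 2"
    have h: "h > 0" "h < e" "h < d" using e d by (auto simp: h_def)
    have "\<forall>y. x \<le> y \<and> y \<le> x + h \<longrightarrow> (f has_real_derivative f' y) (at y)"
      using h by (intro allI impI df) auto
    then obtain z where z: "x < z" "z < x + h" "f (x + h) - f x = (x + h - x) * f' z"
      using MVT2[of x "x + h" f f'] h by auto
    have "f' z > 0" using e(2)[of "z - x"] z h 0 by auto
    then have "h * f' z > 0" using h by simp
    then have "f (x + h) > f x" using z by simp
    moreover have "f (x + h) \<le> f x" using mx[of "x + h"] h by auto
    ultimately show False by simp
  qed
qed

lemma arith_final:
  fixes G1 G2 G1' G2' Pu Pv Qu Qv Tu Tv e d H :: real
  assumes g: "G1 > 0" "G2 > 0" and dp: "d > 0"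
  and hu: "(G1' * G2 - G1 * G2') / G2\<^sup>2 * Pu + G1 / G2 * Qu + Tu / (G1 / G2) = 0"
  and hv: "(G1' * G2 - G1 * G2') / G2\<^sup>2 * Pv + G1 / G2 * Qv + Tv / (G1 / G2) = 0"
  and f1: "Pu - Pv - e * (G2 / G1) + d * (2 * H * (G2 / G1)) = 0"
  and D1: "Qu - Qv - e * ((G2' * G1 - G2 * G1') / G1\<^sup>2) + d * (2 * (G2 / G1 * (G2 / G1) + H * ((G2' * G1 - G2 * G1') / G1\<^sup>2))) \<le> 0"
  and D2: "Tu - Tv \<le> 0"
  shows False
proof -
  define \<rho> where "\<rho> = G1 / G2"
  define \<rho>' where "\<rho>' = (G1' * G2 - G1 * G2') / G2\<^sup>2"
  define R' where "R' = (G2' * G1 - G2 * G1') / G1\<^sup>2"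
  have rp: "\<rho> > 0" using g by (simp add: \<rho>_def)
  have 0: "\<rho>' * (Pu - Pv) + \<rho> * (Qu - Qv) + (Tu - Tv) / \<rho> = 0"
    using hu hv unfolding \<rho>_def \<rho>'_def by (simp add: algebra_simps diff_divide_distrib)
  have X: "\<rho> * (Qu - Qv) \<le> \<rho> * (e * R' - d * (2 * (G2 / G1 * (G2 / G1) + H * R')))"
    using D1 rp unfolding R'_def by (intro mult_left_mono) auto
  have T: "(Tu - Tv) / \<rho> \<le> 0" using D2 rp by (simp add: divide_nonpos_pos)
  have P: "Pu - Pv = e * (G2 / G1) - d * (2 * H * (G2 / G1))" using f1 by simp
  have id: "\<rho>' * (e * (G2 / G1) - d * (2 * H * (G2 / G1))) + \<rho> * (e * R' - d * (2 * (G2 / G1 * (G2 / G1) + H * R')))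
     = - 2 * d * (G2 / G1)"
    unfolding \<rho>_def \<rho>'_def R'_def using g by (simp add: field_simps power2_eq_square)
  have Z: "\<rho>' * (e * (G2 / G1) - d * (2 * H * (G2 / G1))) + \<rho> * (Qu - Qv) + (Tu - Tv) / \<rho> = 0"
    using 0 P by simp
  have "0 \<le> - 2 * d * (G2 / G1)" using Z X T id by linarith
  moreover have "- 2 * d * (G2 / G1) < 0" using dp g by simp
  ultimately show False by simp
qed

locale endsetup =
  fixes g1 g2 g1' g2' :: "real \<Rightarrow> real"
  assumes d1: "\<And>s. 0 \<le> s \<Longrightarrow> (g1 has_real_derivative g1' s) (at s within {0..})"
    and d2: "\<And>s. 0 \<le> s \<Longrightarrow> (g2 has_real_derivative g2' s) (at s within {0..})"
    and arclength: "\<And>s. 0 \<le> s \<Longrightarrow> ((g1' s)\<^sup>2 + (g2' s)\<^sup>2) / (g2 s)\<^sup>2 = 1"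
    and pos1: "\<And>s. 0 \<le> s \<Longrightarrow> g1 s > 0"
    and pos2: "\<And>s. 0 \<le> s \<Longrightarrow> g2 s > 0"
begin

lemma D1: "0 < s \<Longrightarrow> (g1 has_real_derivative g1' s) (at s)"
  using deriv_at_pos[OF d1] by blast
lemma D2: "0 < s \<Longrightarrow> (g2 has_real_derivative g2' s) (at s)"
  using deriv_at_pos[OF d2] by blast

lemma ps_imm:
  assumes "0 < s"
  shows "ps (imm g1 g2 0) (s, th) = g1' s * cos th"
    "ps (imm g1 g2 1) (s, th) = g1' s * sin th"
    "ps (imm g1 g2 2) (s, th) = g2' s"
  unfolding ps_def imm_def using D1[OF assms] D2[OF assms]
  by (auto intro!: DERIV_imp_deriv derivative_eq_intros)

lemma pt_imm:
  shows "pt (imm g1 g2 0) (s, th) = - (g1 s * sin th)"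
    "pt (imm g1 g2 1) (s, th) = g1 s * cos th"
    "pt (imm g1 g2 2) (s, th) = 0"
  unfolding pt_def imm_def
  by (auto intro!: DERIV_imp_deriv derivative_eq_intros)

lemma met:
  assumes "0 < s"
  shows "metE g1 g2 (s, th) = 1" "metF g1 g2 (s, th) = 0"
    "metG g1 g2 (s, th) = (g1 s / g2 s)\<^sup>2"
proof -
  have 3: "{..<3::nat} = {0,1,2}" by auto
  have sc: "(g1' s * cos th)\<^sup>2 + (g1' s * sin th)\<^sup>2 = (g1' s)\<^sup>2 * ((sin th)\<^sup>2 + (cos th)\<^sup>2)"
    by algebra
  have "metE g1 g2 (s, th) = ((g1' s * cos th)\<^sup>2 + (g1' s * sin th)\<^sup>2 + (g2' s)\<^sup>2) / (g2 s)\<^sup>2"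
    unfolding metE_def 3 using ps_imm[OF assms, of th] by (simp add: algebra_simps)
  also have "\<dots> = ((g1' s)\<^sup>2 + (g2' s)\<^sup>2) / (g2 s)\<^sup>2" unfolding sc by simp
  also have "\<dots> = 1" by (rule arclength) (use assms in simp)
  finally show "metE g1 g2 (s, th) = 1" .
  show "metF g1 g2 (s, th) = 0"
    unfolding metF_def 3 using ps_imm[OF assms, of th] pt_imm[of s th] by (simp add: algebra_simps)
  have sc2: "(g1 s * cos th)\<^sup>2 + (g1 s * sin th)\<^sup>2 = (g1 s)\<^sup>2 * ((sin th)\<^sup>2 + (cos th)\<^sup>2)"
    by algebra
  have "metG g1 g2 (s, th) = ((g1 s * cos th)\<^sup>2 + (g1 s * sin th)\<^sup>2) / (g2 s)\<^sup>2"
    unfolding metG_def 3 using pt_imm[of s th] by (simp add: algebra_simps)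
  also have "\<dots> = (g1 s)\<^sup>2 / (g2 s)\<^sup>2" unfolding sc2 by simp
  finally show "metG g1 g2 (s, th) = (g1 s / g2 s)\<^sup>2" by (simp add: power_divide)
qed

lemma Wval:
  assumes "0 < s"
  shows "sqrt (metE g1 g2 (s, th) * metG g1 g2 (s, th) - (metF g1 g2 (s, th))\<^sup>2) = g1 s / g2 s"
  using met[OF assms] pos1[of s] pos2[of s] assms by simp

lemma harm_expand:
  assumes H: "bdd_harmonic_on_end g1 g2 u" and s: "0 < s"
  shows "(g1' s * g2 s - g1 s * g2' s) / (g2 s)\<^sup>2 * ps u (s, th) + g1 s / g2 s * ps (ps u) (s, th)
     + pt (pt u) (s, th) / (g1 s / g2 s) = 0"
proof -
  let ?S = "{p::real\<times>real. 0 < fst p}"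
  have C: "u differentiable_on ?S" "ps u differentiable_on ?S" "pt u differentiable_on ?S"
    and L: "laplace_beltrami g1 g2 u (s, th) = 0"
    using H s unfolding bdd_harmonic_on_end_def C2_on_def by auto
  define E where "E = metE g1 g2"
  define F where "F = metF g1 g2"
  define G where "G = metG g1 g2"
  define W where "W = (\<lambda>q. sqrt (E q * G q - (F q)\<^sup>2))"
  have pos: "g1 s > 0" "g2 s > 0" using pos1 pos2 s by auto
  have A: "ps (\<lambda>q. (G q * ps u q - F q * pt u q) / W q) (s, th) =
     (g1' s * g2 s - g1 s * g2' s) / (g2 s)\<^sup>2 * ps u (s, th) + g1 s / g2 s * ps (ps u) (s, th)"
  proof -
    have "((\<lambda>t. g1 t / g2 t * ps u (t, th)) has_real_derivative
       (g1' s * g2 s - g1 s * g2' s) / (g2 s)\<^sup>2 * ps u (s, th) + g1 s / g2 s * ps (ps u) (s, th)) (at s)"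
      using D1[OF s] D2[OF s] ps_has[OF C(2) s, of th] pos
      by (auto intro!: derivative_eq_intros simp: field_simps power2_eq_square)
    then have "((\<lambda>t. (G (t, th) * ps u (t, th) - F (t, th) * pt u (t, th)) / W (t, th)) has_real_derivative
       (g1' s * g2 s - g1 s * g2' s) / (g2 s)\<^sup>2 * ps u (s, th) + g1 s / g2 s * ps (ps u) (s, th)) (at s)"
    proof (rule has_field_derivative_transform_within_open[where S = "{0<..}"])
      fix t :: real assume "t \<in> {0<..}"
      then have t: "0 < t" by simp
      have "W (t, th) = g1 t / g2 t" unfolding W_def E_def F_def G_def using Wval[OF t] by simp
      then show "g1 t / g2 t * ps u (t, th) = (G (t, th) * ps u (t, th) - F (t, th) * pt u (t, th)) / W (t, th)"
        using met[OF t, of th] pos1[of t] pos2[of t] t unfolding G_def F_def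
        by (simp add: power2_eq_square)
    qed (use s in auto)
    then show ?thesis unfolding ps_def by (simp add: DERIV_imp_deriv)
  qed
  have B: "pt (\<lambda>q. (E q * pt u q - F q * ps u q) / W q) (s, th) = pt (pt u) (s, th) / (g1 s / g2 s)"
  proof -
    have eq: "(\<lambda>t. (E (s, t) * pt u (s, t) - F (s, t) * ps u (s, t)) / W (s, t)) = (\<lambda>t. pt u (s, t) / (g1 s / g2 s))"
      using met[OF s] Wval[OF s] unfolding W_def E_def F_def G_def by simp
    have "((\<lambda>t. pt u (s, t) / (g1 s / g2 s)) has_real_derivative pt (pt u) (s, th) / (g1 s / g2 s)) (at th)"
      using pt_has[OF C(3) s, of th] pos by (auto intro!: derivative_eq_intros)
    then show ?thesis by (subst pt_def) (simp add: eq DERIV_imp_deriv)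
  qed
  have Wp: "W (s, th) = g1 s / g2 s" unfolding W_def E_def F_def G_def using Wval[OF s] by simp
  have "laplace_beltrami g1 g2 u (s, th) =
      ((g1' s * g2 s - g1 s * g2' s) / (g2 s)\<^sup>2 * ps u (s, th) + g1 s / g2 s * ps (ps u) (s, th)
     + pt (pt u) (s, th) / (g1 s / g2 s)) / (g1 s / g2 s)"
    unfolding laplace_beltrami_def Let_def
    using A B Wp unfolding W_def E_def F_def G_def by simp
  then show ?thesis using L pos by simp
qed


definition r where "r t = g2 t / g1 t"
definition h where "h s = integral {0..s} r"

lemma cont_g: "continuous_on {0..} g1" "continuous_on {0..} g2"
  using d1 d2 by (auto simp: continuous_on_eq_continuous_within intro: DERIV_continuous)

lemma cont_r: "continuous_on {0..} r"
proof -
  have "continuous_on {0..} (\<lambda>t. g2 t / g1 t)"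
    using cont_g pos1 by (intro continuous_intros) (auto dest: less_imp_neq[THEN not_sym])
  then show ?thesis unfolding r_def[abs_def] .
qed

lemma r_pos: "0 \<le> t \<Longrightarrow> 0 < r t" using pos1 pos2 by (simp add: r_def)

lemma r_nonneg: "0 \<le> t \<Longrightarrow> 0 \<le> r t" using r_pos less_imp_le by blast

lemma r_int: "0 \<le> a \<Longrightarrow> r integrable_on {a..b}"
  by (rule integrable_continuous_real) (rule continuous_on_subset[OF cont_r], auto)

lemma h_deriv_within: "0 \<le> b \<Longrightarrow> x \<in> {0..b} \<Longrightarrow> (h has_real_derivative r x) (at x within {0..b})"
  unfolding h_def[abs_def]
  by (rule integral_has_real_derivative) (rule continuous_on_subset[OF cont_r], auto)

lemma h_deriv: assumes "0 < t" shows "(h has_real_derivative r t) (at t)"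
proof -
  have "(h has_real_derivative r t) (at t within {0..t+1})" using assms by (intro h_deriv_within) auto
  moreover have "at t within {0..t+1} = at t" using assms by (intro at_within_interior) auto
  ultimately show ?thesis by simp
qed

lemma h_cont: assumes "0 \<le> b" shows "continuous_on {0..b} h"
  unfolding continuous_on_eq_continuous_within
proof
  fix x assume "x \<in> {0..b}"
  from h_deriv_within[OF assms this] show "continuous (at x within {0..b}) h" by (rule DERIV_continuous)
qed

lemma h0: "h 0 = 0" by (simp add: h_def)

lemma h_nonneg: "0 \<le> s \<Longrightarrow> 0 \<le> h s"
  unfolding h_def by (rule integral_nonneg) (use r_int r_nonneg in auto)

lemma h_mono: "0 \<le> a \<Longrightarrow> a \<le> b \<Longrightarrow> h a \<le> h b"
  unfolding h_def by (rule integral_subset_le) (use r_int r_nonneg in auto)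

lemma h_unbounded:
  assumes c: "c > 0" and inf: "emeasure lborel {s. 0 \<le> s \<and> g2 s / g1 s \<ge> c} = \<infinity>"
  shows "\<exists>S\<ge>0. K \<le> h S"
proof (rule ccontr)
  assume "\<not> ?thesis"
  then have bd: "\<And>S. 0 \<le> S \<Longrightarrow> h S < K" by force
  define A where "A = {s. 0 \<le> s \<and> g2 s / g1 s \<ge> c}"
  have "A = {0..} \<inter> r -` {c..}" by (auto simp: A_def r_def)
  then have clA: "closed A" using continuous_closed_preimage[OF cont_r] by simp
  define B where "B n = A \<inter> {0..real n}" for n
  have cB: "compact (B n)" for n unfolding B_def using clA by auto
  have meas: "measure lborel (B n) \<le> K / c" for n
  proof -
    have lm: "A \<inter> {0..real n} \<in> lmeasurable" using cB[of n] lmeasurable_compact B_def by simp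
    have "integral {0..real n} (indicator A) = measure lebesgue (A \<inter> {0..real n})"
      by (rule integral_indicator[OF lm])
    also have "\<dots> = measure lborel (B n)" using borel_compact[OF cB[of n]]
      unfolding B_def by (simp)
    finally have I: "integral {0..real n} (indicator A) = measure lborel (B n)" .
    have ii: "(indicat_real A) integrable_on {0..real n}" using integrable_on_indicator lm by blast
    have "integral {0..real n} (\<lambda>t. c * indicat_real A t) \<le> integral {0..real n} r"
    proof (rule integral_le)
      show "(\<lambda>t. c * indicat_real A t) integrable_on {0..real n}" using ii by (rule integrable_on_mult_right)
      show "r integrable_on {0..real n}" by (rule r_int) simp
      fix x assume "x \<in> {0..real n}"
      then show "c * indicat_real A x \<le> r x" using r_pos[of x]
        by (auto simp: indicator_def A_def r_def)
    qed
    then have "c * measure lborel (B n) \<le> h (real n)"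
      using I ii unfolding h_def by (simp add: integral_mult)
    also have "\<dots> < K" using bd by simp
    finally show ?thesis using c by (simp add: field_simps)
  qed
  have fin: "emeasure lborel (B n) \<le> ennreal (K / c)" for n
  proof -
    have "emeasure lborel (B n) < \<infinity>" using cB[of n] compact_imp_bounded emeasure_bounded_finite by blast
    then have "emeasure lborel (B n) = ennreal (measure lborel (B n))"
      by (intro emeasure_eq_ennreal_measure) auto
    also have "\<dots> \<le> ennreal (K / c)" using meas[of n] by (rule ennreal_leI)
    finally show ?thesis .
  qed
  have "(SUP n. emeasure lborel (B n)) = emeasure lborel (\<Union>n. B n)"
    by (rule SUP_emeasure_incseq) (use borel_compact[OF cB] in \<open>auto simp: incseq_def B_def\<close>)
  moreover have "(\<Union>n. B n) = A"
  proof
    show "A \<subseteq> (\<Union>n. B n)"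
    proof
      fix x assume "x \<in> A"
      obtain n :: nat where "x \<le> real n" using real_arch_simple by blast
      then show "x \<in> (\<Union>n. B n)" using \<open>x \<in> A\<close> by (auto simp: B_def A_def)
    qed
  qed (auto simp: B_def)
  ultimately have "emeasure lborel A \<le> ennreal (K / c)" using fin by (metis SUP_least)
  then show False using inf unfolding A_def by (simp add: top_unique)
qed


lemma r_deriv: assumes "0 < t"
  shows "(r has_real_derivative (g2' t * g1 t - g2 t * g1' t) / (g1 t)\<^sup>2) (at t)"
proof -
  have "((\<lambda>t. g2 t / g1 t) has_real_derivative (g2' t * g1 t - g2 t * g1' t) / (g1 t)\<^sup>2) (at t)"
    using D1[OF assms] D2[OF assms] pos1[of t] assms
    by (auto intro!: derivative_eq_intros simp: power2_eq_square)
  then show ?thesis unfolding r_def[abs_def] .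
qed

lemma compare:
  assumes c: "c > 0" and inf: "emeasure lborel {s. 0 \<le> s \<and> g2 s / g1 s \<ge> c} = \<infinity>"
    and Hu: "bdd_harmonic_on_end g1 g2 u" and Hv: "bdd_harmonic_on_end g1 g2 v"
    and bd: "\<And>\<theta>. u (0, \<theta>) = v (0, \<theta>)" and s0: "0 < s0"
  shows "u (s0, \<theta>0) \<le> v (s0, \<theta>0)"
proof (rule ccontr)
  let ?S = "{p::real\<times>real. 0 < fst p}"
  assume neg: "\<not> ?thesis"
  define a where "a = u (s0, \<theta>0) - v (s0, \<theta>0)"
  have a: "a > 0" using neg by (simp add: a_def)
  obtain Mu where Mu: "\<And>p. 0 \<le> fst p \<Longrightarrow> \<bar>u p\<bar> \<le> Mu" using Hu unfolding bdd_harmonic_on_end_def by blast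
  obtain Mv where Mv: "\<And>p. 0 \<le> fst p \<Longrightarrow> \<bar>v p\<bar> \<le> Mv" using Hv unfolding bdd_harmonic_on_end_def by blast
  define M where "M = Mu + Mv"
  have M: "u p - v p \<le> M" if "0 \<le> fst p" for p using Mu[OF that] Mv[OF that] by (simp add: M_def)
  have per_u: "\<And>s \<theta>. u (s, \<theta> + 2 * pi) = u (s, \<theta>)" using Hu unfolding bdd_harmonic_on_end_def by auto
  have per_v: "\<And>s \<theta>. v (s, \<theta> + 2 * pi) = v (s, \<theta>)" using Hv unfolding bdd_harmonic_on_end_def by auto
  have cu: "continuous_on {p. 0 \<le> fst p} u" using Hu unfolding bdd_harmonic_on_end_def by auto
  have cv: "continuous_on {p. 0 \<le> fst p} v" using Hv unfolding bdd_harmonic_on_end_def by auto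
  have Cu: "u differentiable_on ?S" "ps u differentiable_on ?S" "pt u differentiable_on ?S"
    using Hu unfolding bdd_harmonic_on_end_def C2_on_def by auto
  have Cv: "v differentiable_on ?S" "ps v differentiable_on ?S" "pt v differentiable_on ?S"
    using Hv unfolding bdd_harmonic_on_end_def C2_on_def by auto
  have hs0: "0 \<le> h s0" using h_nonneg s0 by simp
  define \<epsilon> where "\<epsilon> = a / (3 * (h s0 + 1))"
  have ep: "\<epsilon> > 0" using a hs0 by (simp add: \<epsilon>_def)
  have eph: "\<epsilon> * h s0 \<le> a / 3"
  proof -
    have "\<epsilon> * h s0 = a / 3 * (h s0 / (h s0 + 1))" by (simp add: \<epsilon>_def field_simps)
    also have "\<dots> \<le> a / 3 * 1" using a hs0 by (intro mult_left_mono) auto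
    finally show ?thesis by simp
  qed
  obtain S0 where S0: "S0 \<ge> 0" "(M + 1) / \<epsilon> \<le> h S0" using h_unbounded[OF c inf] by blast
  define S where "S = max S0 (s0 + 1)"
  have S: "s0 < S" "0 < S" using s0 by (auto simp: S_def)
  have "h S0 \<le> h S" using S0 by (intro h_mono) (auto simp: S_def)
  then have "(M + 1) / \<epsilon> \<le> h S" using S0 by simp
  then have epS: "M + 1 \<le> \<epsilon> * h S" using ep by (simp add: field_simps)
  define \<delta> where "\<delta> = 1 / (2 * ((h S)\<^sup>2 + 1))"
  have dp: "\<delta> > 0" unfolding \<delta>_def by (intro divide_pos_pos mult_pos_pos add_nonneg_pos) auto
  have hp: "0 < (h S)\<^sup>2 + 1" by (intro add_nonneg_pos) auto
  have dS: "\<delta> * (h S)\<^sup>2 \<le> 1 / 2"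
  proof -
    have "\<delta> * (h S)\<^sup>2 = 1 / 2 * ((h S)\<^sup>2 / ((h S)\<^sup>2 + 1))" by (simp add: \<delta>_def field_simps)
    also have "\<dots> \<le> 1 / 2 * 1" by (intro mult_left_mono) (use hp in \<open>simp_all add: pos_divide_le_eq\<close>)
    finally show ?thesis by simp
  qed
  define \<phi> where "\<phi> q = u q - v q - \<epsilon> * h (fst q) + \<delta> * (h (fst q))\<^sup>2" for q
  define K where "K = {0..S} \<times> {\<theta>0 - 2 * pi..\<theta>0 + 2 * pi}"
  have Ksub: "K \<subseteq> {p. 0 \<le> fst p}" by (auto simp: K_def)
  have hK: "continuous_on K (\<lambda>q. h (fst q))"
    by (rule continuous_on_compose2[OF h_cont[OF less_imp_le[OF S(2)]] continuous_on_fst]) (use S in \<open>auto simp: K_def\<close>)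
  have cK: "continuous_on K \<phi>"
    unfolding \<phi>_def
    by (intro continuous_intros continuous_on_subset[OF cu Ksub] continuous_on_subset[OF cv Ksub] hK)
  have kK: "compact K" unfolding K_def by (intro compact_Times compact_Icc)
  have p0K: "(s0, \<theta>0) \<in> K" using s0 S by (auto simp: K_def)
  obtain q where qK: "q \<in> K" and qmax: "\<And>y. y \<in> K \<Longrightarrow> \<phi> y \<le> \<phi> q"
    using continuous_attains_sup[OF kK _ cK] p0K by blast
  obtain s1 \<theta>1 where q: "q = (s1, \<theta>1)" by fastforce
  have "\<phi> (s0, \<theta>0) = a - \<epsilon> * h s0 + \<delta> * (h s0)\<^sup>2" by (simp add: \<phi>_def a_def)
  moreover have "0 \<le> \<delta> * (h s0)\<^sup>2" using dp by simp
  ultimately have "\<phi> (s0, \<theta>0) \<ge> a - a / 3" using eph by linarith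
  then have phq: "\<phi> q > 0" using qmax[OF p0K] a by linarith
  have s1: "0 \<le> s1" "s1 \<le> S" "\<theta>0 - 2 * pi \<le> \<theta>1" "\<theta>1 \<le> \<theta>0 + 2 * pi" using qK q by (auto simp: K_def)
  have "s1 \<noteq> 0"
  proof
    assume "s1 = 0"
    then have "\<phi> q = 0" using q bd[of \<theta>1] by (simp add: \<phi>_def h0)
    then show False using phq by simp
  qed
  then have s1p: "0 < s1" using s1 by simp
  have "s1 \<noteq> S"
  proof
    assume "s1 = S"
    then have "\<phi> q = u (S, \<theta>1) - v (S, \<theta>1) - \<epsilon> * h S + \<delta> * (h S)\<^sup>2" using q by (simp add: \<phi>_def)
    also have "\<dots> \<le> M - (M + 1) + 1 / 2" using M[of "(S, \<theta>1)"] S epS dS by simp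
    finally show False using phq by simp
  qed
  then have s1S: "s1 < S" using s1 by simp
  define \<theta>2 where "\<theta>2 = (if \<theta>1 = \<theta>0 + 2 * pi \<or> \<theta>1 = \<theta>0 - 2 * pi then \<theta>0 else \<theta>1)"
  have th2: "\<theta>0 - 2 * pi < \<theta>2" "\<theta>2 < \<theta>0 + 2 * pi" using s1 pi_gt_zero by (auto simp: \<theta>2_def)
  have "\<phi> (s1, \<theta>2) = \<phi> q"
  proof (cases "\<theta>1 = \<theta>0 + 2 * pi \<or> \<theta>1 = \<theta>0 - 2 * pi")
    case True
    then show ?thesis
    proof
      assume "\<theta>1 = \<theta>0 + 2 * pi" then show ?thesis using q per_u per_v by (simp add: \<theta>2_def \<phi>_def)
    next
      assume e: "\<theta>1 = \<theta>0 - 2 * pi"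
      have "u (s1, \<theta>0) = u (s1, \<theta>1)" "v (s1, \<theta>0) = v (s1, \<theta>1)"
        using per_u[of s1 \<theta>1] per_v[of s1 \<theta>1] e by simp_all
      then show ?thesis using q e pi_gt_zero by (simp add: \<theta>2_def \<phi>_def)
    qed
  qed (simp add: \<theta>2_def q)
  then have max2: "\<And>y. y \<in> K \<Longrightarrow> \<phi> y \<le> \<phi> (s1, \<theta>2)" using qmax by simp
  define d where "d = min (min s1 (S - s1)) (min (\<theta>2 - (\<theta>0 - 2 * pi)) (\<theta>0 + 2 * pi - \<theta>2))"
  have d: "d > 0" using s1p s1S th2 by (simp add: d_def)
  define f1' where "f1' t = ps u (t, \<theta>2) - ps v (t, \<theta>2) - \<epsilon> * r t + \<delta> * (2 * h t * r t)" for t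
  have f1d: "((\<lambda>t. \<phi> (t, \<theta>2)) has_real_derivative f1' t) (at t)" if "\<bar>s1 - t\<bar> < d" for t
  proof -
    have t: "0 < t" using that d s1p by (auto simp: d_def)
    show ?thesis unfolding \<phi>_def f1'_def
      using ps_has[OF Cu(1) t, of \<theta>2] ps_has[OF Cv(1) t, of \<theta>2] h_deriv[OF t]
      by (auto intro!: derivative_eq_intros)
  qed
  define D1 where "D1 = ps (ps u) (s1, \<theta>2) - ps (ps v) (s1, \<theta>2)
      - \<epsilon> * ((g2' s1 * g1 s1 - g2 s1 * g1' s1) / (g1 s1)\<^sup>2)
      + \<delta> * (2 * (r s1 * r s1 + h s1 * ((g2' s1 * g1 s1 - g2 s1 * g1' s1) / (g1 s1)\<^sup>2)))"
  have f1dd: "(f1' has_real_derivative D1) (at s1)"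
    unfolding f1'_def D1_def
    using ps_has[OF Cu(2) s1p, of \<theta>2] ps_has[OF Cv(2) s1p, of \<theta>2] h_deriv[OF s1p] r_deriv[OF s1p]
    by (auto intro!: derivative_eq_intros simp: algebra_simps)
  have f1max: "\<phi> (t, \<theta>2) \<le> \<phi> (s1, \<theta>2)" if "\<bar>s1 - t\<bar> < d" for t
    using that th2 by (intro max2) (auto simp: K_def d_def abs_if split: if_splits)
  have R1: "f1' s1 = 0 \<and> D1 \<le> 0" by (rule second_deriv_max[OF d f1max f1d f1dd])
  define f2' where "f2' t = pt u (s1, t) - pt v (s1, t)" for t
  have f2d: "((\<lambda>t. \<phi> (s1, t)) has_real_derivative f2' t) (at t)" for t
    unfolding \<phi>_def f2'_def
    using pt_has[OF Cu(1) s1p, of t] pt_has[OF Cv(1) s1p, of t]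
    by (auto intro!: derivative_eq_intros)
  define D2 where "D2 = pt (pt u) (s1, \<theta>2) - pt (pt v) (s1, \<theta>2)"
  have f2dd: "(f2' has_real_derivative D2) (at \<theta>2)"
    unfolding f2'_def D2_def
    using pt_has[OF Cu(3) s1p, of \<theta>2] pt_has[OF Cv(3) s1p, of \<theta>2]
    by (auto intro!: derivative_eq_intros)
  have f2max: "\<phi> (s1, t) \<le> \<phi> (s1, \<theta>2)" if "\<bar>\<theta>2 - t\<bar> < d" for t
    using that s1p s1S by (intro max2) (auto simp: K_def d_def abs_if split: if_splits)
  have R2: "f2' \<theta>2 = 0 \<and> D2 \<le> 0" by (rule second_deriv_max[OF d f2max f2d f2dd])
  have hu: "(g1' s1 * g2 s1 - g1 s1 * g2' s1) / (g2 s1)\<^sup>2 * ps u (s1, \<theta>2) + g1 s1 / g2 s1 * ps (ps u) (s1, \<theta>2)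
     + pt (pt u) (s1, \<theta>2) / (g1 s1 / g2 s1) = 0" by (rule harm_expand[OF Hu s1p])
  have hv: "(g1' s1 * g2 s1 - g1 s1 * g2' s1) / (g2 s1)\<^sup>2 * ps v (s1, \<theta>2) + g1 s1 / g2 s1 * ps (ps v) (s1, \<theta>2)
     + pt (pt v) (s1, \<theta>2) / (g1 s1 / g2 s1) = 0" by (rule harm_expand[OF Hv s1p])
  show False
    apply (rule arith_final[OF pos1[of s1] pos2[of s1] dp hu hv, of \<epsilon> "h s1"])
    using R1 R2 s1p unfolding f1'_def D1_def D2_def r_def by auto
qed

end

theorem theorem4p1:
  fixes g1 g2 g1' g2' :: "real \<Rightarrow> real" and c :: real
  assumes smooth1: "smooth_halfline g1" and smooth2: "smooth_halfline g2"
    and d1: "\<And>s. 0 \<le> s \<Longrightarrow> (g1 has_real_derivative g1' s) (at s within {0..})"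
    and d2: "\<And>s. 0 \<le> s \<Longrightarrow> (g2 has_real_derivative g2' s) (at s within {0..})"
    and arclength: "\<And>s. 0 \<le> s \<Longrightarrow> ((g1' s)\<^sup>2 + (g2' s)\<^sup>2) / (g2 s)\<^sup>2 = 1"
    and pos1: "\<And>s. 0 \<le> s \<Longrightarrow> g1 s > 0"
    and pos2: "\<And>s. 0 \<le> s \<Longrightarrow> g2 s > 0"
    and c_pos: "c > 0"
    and infinite: "emeasure lborel {s. 0 \<le> s \<and> g2 s / g1 s \<ge> c} = \<infinity>"
  shows "parabolic_end g1 g2"
proof -
  interpret endsetup g1 g2 g1' g2'
    by unfold_locales (fact d1 d2 arclength pos1 pos2)+
  show ?thesis unfolding parabolic_end_def
  proof (intro allI impI)
    fix u v :: "real \<times> real \<Rightarrow> real" and p :: "real \<times> real"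
    assume Hu: "bdd_harmonic_on_end g1 g2 u" and Hv: "bdd_harmonic_on_end g1 g2 v"
      and bd: "\<forall>\<theta>. u (0, \<theta>) = v (0, \<theta>)" and p: "0 \<le> fst p"
    obtain s \<theta> where ps: "p = (s, \<theta>)" by fastforce
    show "u p = v p"
    proof (cases "s = 0")
      case True then show ?thesis using bd ps by simp
    next
      case False
      then have s: "0 < s" using p ps by simp
      have "u (s, \<theta>) \<le> v (s, \<theta>)" using compare[OF c_pos infinite Hu Hv _ s] bd by auto
      moreover have "v (s, \<theta>) \<le> u (s, \<theta>)" using compare[OF c_pos infinite Hv Hu _ s] bd by auto
      ultimately show ?thesis using ps by simp
    qed
  qed
qed

end
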